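(* Let $n$ be a positive integer and $(A_i)_{i\in I}$ a family of pairwise commuting matrices in $M_n(\mathbb{C})$ such that $\sum_{i\in I}A_i^*A_i$ converges to a scalar matrix (a scalar multiple of the identity). Then every $A_i$ is normal, and consequently the $A_i$ generate a commutative $C^*$-algebra.
   Context: The sum over the (possibly infinite) index set $I$ is the limit of the net of finite partial sums. *)

theory Defs
  imports "HOL-Analysis.Analysis"
begin

definition adjoint_mat :: "complex ^'n ^'n \<Rightarrow> complex ^'n ^'n" where
  "adjoint_mat A = (\<chi> i j. cnj (A $ j $ i))"

definition normal_mat :: "complex ^'n ^'n \<Rightarrow> bool" where
  "normal_mat A \<longleftrightarrow> adjoint_mat A ** A = A ** adjoint_mat A"

text \<open>The *-subalgebra of M_n(C) generated by a set of matrices S. In finite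
  dimension every linear subspace is closed, so this is the C*-algebra generated by S.\<close>
inductive_set star_alg_gen :: "(complex ^'n ^'n) set \<Rightarrow> (complex ^'n ^'n) set"
  for S :: "(complex ^'n ^'n) set" where
  gen: "A \<in> S \<Longrightarrow> A \<in> star_alg_gen S"
| zero: "0 \<in> star_alg_gen S"
| add: "A \<in> star_alg_gen S \<Longrightarrow> B \<in> star_alg_gen S \<Longrightarrow> A + B \<in> star_alg_gen S"
| smult: "A \<in> star_alg_gen S \<Longrightarrow> mat (c::complex) ** A \<in> star_alg_gen S"
| mult: "A \<in> star_alg_gen S \<Longrightarrow> B \<in> star_alg_gen S \<Longrightarrow> A ** B \<in> star_alg_gen S"
| adj: "A \<in> star_alg_gen S \<Longrightarrow> adjoint_mat A \<in> star_alg_gen S"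

end

theory Submission imports Defs begin

definition cinner :: "complex ^'n \<Rightarrow> complex ^'n \<Rightarrow> complex" where
  "cinner x y = (\<Sum>k\<in>UNIV. x $ k * cnj (y $ k))"

lemma cinner_adj: "cinner (M *v x) y = cinner x (adjoint_mat M *v y)"
  unfolding cinner_def matrix_vector_mult_def adjoint_mat_def
  apply (simp add: sum_distrib_left sum_distrib_right)
  apply (subst sum.swap)
  apply (simp add: mult_ac)
  done

lemma adj_adj[simp]: "adjoint_mat (adjoint_mat M) = M"
  unfolding adjoint_mat_def by (simp add: vec_eq_iff)

lemma adj_mult: "adjoint_mat (M ** N) = adjoint_mat N ** adjoint_mat M"
  unfolding adjoint_mat_def matrix_matrix_mult_def by (simp add: vec_eq_iff mult.commute)

lemma cinner_adj2: "cinner x (M *v y) = cinner (adjoint_mat M *v x) y"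
  by (metis adj_adj cinner_adj)

lemma cinner_self: "cinner x x = of_real (norm x ^ 2)"
proof -
  have "norm x ^ 2 = (\<Sum>k\<in>UNIV. norm (x $ k) ^ 2)"
    unfolding norm_vec_def L2_set_def by (simp add: sum_nonneg)
  then have "of_real (norm x ^ 2) = (\<Sum>k\<in>UNIV. (of_real (norm (x $ k) ^ 2) :: complex))"
    by simp
  then show ?thesis unfolding cinner_def by (simp only: complex_norm_square)
qed

lemma cinner_diff_left: "cinner (x - y) z = cinner x z - cinner y z"
  unfolding cinner_def by (simp add: algebra_simps sum_subtractf)
lemma cinner_diff_right: "cinner z (x - y) = cinner z x - cinner z y"
  unfolding cinner_def by (simp add: algebra_simps sum_subtractf)
lemma cinner_commute: "cinner y x = cnj (cinner x y)"
  unfolding cinner_def by (simp add: cnj_sum mult.commute)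

lemma norm_diff_sq: "norm (u - v) ^ 2 = norm u ^ 2 + norm v ^ 2 - 2 * Re (cinner u v)"
proof -
  have "of_real (norm (u - v) ^ 2) = cinner u u - cinner u v - cinner v u + cinner v v"
    by (simp only: cinner_self[symmetric] cinner_diff_left cinner_diff_right diff_diff_eq2 diff_add_eq) (simp add: algebra_simps)
  then have "norm (u - v) ^ 2 = Re (cinner u u - cinner u v - cinner v u + cinner v v)"
    by (metis Re_complex_of_real)
  then show ?thesis by (simp add: cinner_self cinner_commute[of v u])
qed

lemma mat_mult_vec: "mat c *v y = c *s y"
  unfolding mat_def matrix_vector_mult_def by (simp add: vec_eq_iff if_distrib if_distribR cong: if_cong)

lemma cinner_smult: "cinner (c *s y) z = c * cinner y z"
  unfolding cinner_def by (simp add: sum_distrib_left mult_ac)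

lemma H1:
  fixes A :: "'i \<Rightarrow> complex ^'n ^'n"
  assumes sum: "((\<lambda>i. adjoint_mat (A i) ** A i) has_sum mat c) I"
  shows "((\<lambda>i. cinner (A i *v y) (A i *v z)) has_sum (c * cinner y z)) I"
proof -
  have lin: "linear (\<lambda>M::complex^'n^'n. cinner (M *v y) z)"
    unfolding cinner_def matrix_vector_mult_def linear_iff
    apply (simp add: distrib_left distrib_right sum.distrib sum_distrib_left vector_scaleR_component)
    apply (simp add: scaleR_conv_of_real sum_distrib_left mult_ac)
    done
  have bl: "bounded_linear (\<lambda>M::complex^'n^'n. cinner (M *v y) z)"
    using lin linear_conv_bounded_linear by blast
  from has_sum_bounded_linear[OF bl sum]
  show ?thesis
    by (simp add: matrix_vector_mul_assoc[symmetric] cinner_adj2 mat_mult_vec cinner_smult)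
qed

lemma has_sum_diff':
  fixes f :: "'a \<Rightarrow> 'b::topological_ab_group_add"
  assumes "(f has_sum a) A" "(g has_sum b) A"
  shows "((\<lambda>x. f x - g x) has_sum (a - b)) A"
proof -
  have "((\<lambda>x. - g x) has_sum (- b)) A" using assms(2) by (simp add: has_sum_uminus)
  from has_sum_add[OF assms(1) this] show ?thesis by simp
qed

lemma HR:
  assumes H: "\<And>y z. ((\<lambda>i. cinner (A i *v y) (A i *v z)) has_sum (c * cinner y z)) I"
  shows "((\<lambda>i. norm (A i *v y) ^ 2) has_sum (Re c * norm y ^ 2)) I"
  using has_sum_Re[OF H[of y y]] by (simp add: cinner_self)

lemma key:
  fixes A :: "'i \<Rightarrow> complex^'n^'n" and B :: "complex^'n^'n"
  assumes commB: "\<And>i. i \<in> I \<Longrightarrow> B ** A i = A i ** B"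
   and H: "\<And>y z. ((\<lambda>i. cinner (A i *v y) (A i *v z)) has_sum (c * cinner y z)) I"
   and qmin: "\<And>y. norm (B *v y)^2 - norm (adjoint_mat B *v y)^2 \<ge> m * norm y ^2"
   and qx: "norm (B *v x)^2 - norm (adjoint_mat B *v x)^2 = m * norm x^2"
   and i: "i \<in> I"
  shows "adjoint_mat B *v (A i *v x) = A i *v (adjoint_mat B *v x)"
proof -
  define Bs where "Bs = adjoint_mat B"
  define q where "q y = norm (B *v y)^2 - norm (Bs *v y)^2" for y
  have BsB: "adjoint_mat Bs = B" unfolding Bs_def by simp
  have HX: "((\<lambda>i. Re (cinner (A i *v x) (A i *v ((B ** Bs) *v x)))) has_sum (Re c * norm (Bs *v x)^2)) I"
  proof -
    have "cinner x ((B ** Bs) *v x) = cinner (Bs *v x) (Bs *v x)"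
      by (simp add: matrix_vector_mul_assoc[symmetric] cinner_adj2 Bs_def)
    then show ?thesis using has_sum_Re[OF H[of x "(B ** Bs) *v x"]] by (simp add: cinner_self)
  qed
  define g where "g i = norm (Bs *v (A i *v x) - A i *v (Bs *v x))^2 + q (A i *v x) - m * norm (A i *v x)^2" for i
  have gid: "g i = norm (A i *v (B *v x))^2 + norm (A i *v (Bs *v x))^2
      - 2 * Re (cinner (A i *v x) (A i *v ((B ** Bs) *v x))) - m * norm (A i *v x)^2" if "i \<in> I" for i
  proof -
    have c1: "B *v (A i *v w) = A i *v (B *v w)" for w
      by (simp add: matrix_vector_mul_assoc commB[OF that])
    have "cinner (Bs *v (A i *v x)) (A i *v (Bs *v x)) = cinner (A i *v x) (B *v (A i *v (Bs *v x)))"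
      using cinner_adj[of Bs] BsB by simp
    also have "\<dots> = cinner (A i *v x) (A i *v ((B ** Bs) *v x))"
      by (simp add: matrix_vector_mul_assoc matrix_mul_assoc commB[OF that])
    finally have e: "cinner (Bs *v (A i *v x)) (A i *v (Bs *v x)) = cinner (A i *v x) (A i *v ((B ** Bs) *v x))" .
    show ?thesis unfolding g_def q_def norm_diff_sq e c1 by simp
  qed
  have gsum: "(g has_sum 0) I"
  proof -
    have "((\<lambda>i. norm (A i *v (B *v x))^2 + norm (A i *v (Bs *v x))^2
      - 2 * Re (cinner (A i *v x) (A i *v ((B ** Bs) *v x))) - m * norm (A i *v x)^2) has_sum
      (Re c * norm (B *v x)^2 + Re c * norm (Bs *v x)^2 - 2 * (Re c * norm (Bs *v x)^2) - m * (Re c * norm x^2))) I"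
      by (intro has_sum_diff' has_sum_add has_sum_cmult_right HR[OF H] HX)
    moreover have "Re c * norm (B *v x)^2 + Re c * norm (Bs *v x)^2 - 2 * (Re c * norm (Bs *v x)^2) - m * (Re c * norm x^2) = 0"
      using qx unfolding Bs_def by (simp add: algebra_simps)
    ultimately show ?thesis using has_sum_cong[of I g] gid by simp
  qed
  have gnn: "q (A i *v x) - m * norm (A i *v x)^2 \<ge> 0" for i
    using qmin[of "A i *v x"] unfolding q_def Bs_def by simp
  have gi: "(g has_sum g i) {i}" using has_sum_finite[of "{i}" g] by simp
  have gnn2: "0 \<le> g k" for k
  proof -
    have "0 \<le> norm (Bs *v (A k *v x) - A k *v (Bs *v x))^2" by simp
    then show ?thesis using gnn[of k] unfolding g_def by linarith
  qed
  have "g i \<le> 0"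
    by (rule has_sum_mono_neutral[OF gi gsum]) (use i gnn2 in auto)
  then have "norm (Bs *v (A i *v x) - A i *v (Bs *v x))^2 \<le> 0"
    using gnn[of i] unfolding g_def by linarith
  then show ?thesis unfolding Bs_def by simp
qed


lemma nsq: "norm (v::complex^'n) ^ 2 = (\<Sum>l\<in>UNIV. cmod (v $ l) ^ 2)"
  unfolding norm_vec_def L2_set_def by (simp add: sum_nonneg)

lemma col: "(M *v axis k (1::complex)) $ l = M $ l $ k"
  unfolding matrix_vector_mult_def axis_def by (simp add: if_distrib if_distribR cong: if_cong)

lemma norm_axis_c: "norm (axis k (1::complex) :: complex^'n) = 1"
proof -
  have "norm (axis k (1::complex) :: complex^'n) ^ 2 = 1"
    unfolding nsq axis_def by (simp add: if_distrib if_distribR cong: if_cong)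
  then show ?thesis by (simp add: power2_eq_1_iff)
qed

lemma mvec_scaleR: "(M::complex^'n^'n) *v (r *\<^sub>R y) = r *\<^sub>R (M *v y)"
  using linear_iff matrix_vector_mul_linear by blast

lemma adj_comm:
  fixes A :: "'i \<Rightarrow> complex^'n^'n" and B :: "complex^'n^'n"
  assumes commB: "\<And>i. i \<in> I \<Longrightarrow> B ** A i = A i ** B"
   and H: "\<And>y z. ((\<lambda>i. cinner (A i *v y) (A i *v z)) has_sum (c * cinner y z)) I"
   and j: "j \<in> I" "A j = B"
  shows "\<forall>i\<in>I. adjoint_mat B ** A i = A i ** adjoint_mat B"
proof -
  define Bs where "Bs = adjoint_mat B"
  define q where "q y = norm (B *v y)^2 - norm (Bs *v y)^2" for y
  have BsB: "adjoint_mat Bs = B" unfolding Bs_def by simp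
  have qscale: "q (r *\<^sub>R y) = r^2 * q y" for r y
    unfolding q_def mvec_scaleR by (simp add: power_mult_distrib algebra_simps)
  have cont: "continuous_on UNIV q"
  proof -
    have bl: "bounded_linear ((*v) M)" for M :: "complex^'n^'n"
      using linear_conv_bounded_linear matrix_vector_mul_linear by blast
    show ?thesis unfolding q_def
      by (intro continuous_intros linear_continuous_on bl)
  qed
  have ne: "sphere (0::complex^'n) 1 \<noteq> {}"
    using norm_axis_c[where 'n='n] by (metis mem_sphere_0 empty_iff)
  obtain x0 where x0: "x0 \<in> sphere 0 1" and x0min: "\<And>y. y \<in> sphere 0 1 \<Longrightarrow> q x0 \<le> q y"
    using continuous_attains_inf[OF compact_sphere ne continuous_on_subset[OF cont]] by blast
  define m where "m = q x0"
  have qmin: "m * norm y ^ 2 \<le> q y" for y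
  proof (cases "y = 0")
    case True then show ?thesis unfolding q_def by simp
  next
    case False
    let ?u = "(1 / norm y) *\<^sub>R y"
    have "?u \<in> sphere 0 1" using False by simp
    then have "m \<le> q ?u" using x0min m_def by blast
    also have "q ?u = q y / norm y ^ 2" unfolding qscale by (simp add: power_divide)
    finally show ?thesis using False by (simp add: field_simps)
  qed
  have nx0: "norm x0 = 1" using x0 by simp
  have K: "\<And>x i. m * norm x ^ 2 = q x \<Longrightarrow> i \<in> I \<Longrightarrow> Bs *v (A i *v x) = A i *v (Bs *v x)"
    unfolding Bs_def
    by (rule key[OF commB H]) (use qmin in \<open>auto simp: q_def Bs_def\<close>)
  have qzero: "q x = 0" if "Bs *v (B *v x) = B *v (Bs *v x)" for x
  proof -
    have "cinner (B *v x) (B *v x) = cinner x (Bs *v (B *v x))" by (simp add: cinner_adj Bs_def)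
    moreover have "cinner (Bs *v x) (Bs *v x) = cinner x (B *v (Bs *v x))" using cinner_adj[of Bs] BsB by simp
    ultimately have "cinner (B *v x) (B *v x) = cinner (Bs *v x) (Bs *v x)" using that by simp
    then have "norm (B *v x)^2 = norm (Bs *v x)^2" by (metis cinner_self of_real_eq_iff)
    then show ?thesis unfolding q_def by simp
  qed
  have "m = 0"
    using qzero[OF K[of x0 j, unfolded j(2)]] nx0 j by (simp add: m_def)
  then have qnn: "0 \<le> q y" for y using qmin[of y] by simp
  have frob: "(\<Sum>k\<in>UNIV. q (axis k 1)) = 0"
  proof -
    have "(\<Sum>k\<in>UNIV. norm (Bs *v axis k 1)^2) = (\<Sum>k\<in>UNIV. \<Sum>l\<in>UNIV. cmod (B $ k $ l)^2)"
      unfolding nsq col Bs_def adjoint_mat_def by simp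
    also have "\<dots> = (\<Sum>k\<in>UNIV. \<Sum>l\<in>UNIV. cmod (B $ l $ k)^2)" by (rule sum.swap)
    also have "\<dots> = (\<Sum>k\<in>UNIV. norm (B *v axis k 1)^2)" unfolding nsq col by simp
    finally show ?thesis unfolding q_def by (simp add: sum_subtractf)
  qed
  have qk: "q (axis k 1) = 0" for k
    using frob qnn by (simp add: sum_nonneg_eq_0_iff)
  show ?thesis
  proof
    fix i assume i: "i \<in> I"
    have "Bs *v (A i *v axis k 1) = A i *v (Bs *v axis k 1)" for k
      using K[of "axis k 1" i] qk[of k] i \<open>m = 0\<close> by simp
    then have "((Bs ** A i) *v axis k 1) $ l = ((A i ** Bs) *v axis k 1) $ l" for k l
      by (simp add: matrix_vector_mul_assoc)
    then show "adjoint_mat B ** A i = A i ** adjoint_mat B"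
      unfolding col Bs_def by (simp add: vec_eq_iff)
  qed
qed


lemma mat_comm: "mat (c::complex) ** (M::complex^'n^'n) = M ** mat c"
  unfolding mat_def matrix_matrix_mult_def
  by (simp add: vec_eq_iff if_distrib if_distribR mult.commute cong: if_cong)

lemma matrix_add_rdistrib': "((B + C) ** A) = (B ** A) + (C ** A)"
  by (vector matrix_matrix_mult_def sum.distrib[symmetric] field_simps)

lemma comm_smult: "X ** M = M ** X \<Longrightarrow> (mat d ** X) ** M = M ** (mat d ** (X::complex^'n^'n))"
proof -
  assume h: "X ** M = M ** X"
  have "(mat d ** X) ** M = mat d ** (M ** X)" by (simp add: matrix_mul_assoc[symmetric] h)
  also have "\<dots> = (M ** mat d) ** X" by (simp add: matrix_mul_assoc mat_comm)
  finally show ?thesis by (simp add: matrix_mul_assoc)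
qed

lemma comm_mult: "X ** M = M ** X \<Longrightarrow> Y ** M = M ** Y \<Longrightarrow> (X ** Y) ** M = M ** (X ** (Y::complex^'n^'n))"
proof -
  assume h: "X ** M = M ** X" "Y ** M = M ** Y"
  have "(X ** Y) ** M = X ** (M ** Y)" by (simp add: matrix_mul_assoc[symmetric] h)
  also have "\<dots> = (M ** X) ** Y" by (simp add: matrix_mul_assoc h)
  finally show ?thesis by (simp add: matrix_mul_assoc)
qed

lemma comm_adj: "X ** M = M ** X \<Longrightarrow> adjoint_mat X ** adjoint_mat M = adjoint_mat M ** adjoint_mat X"
  by (metis adj_mult)

lemma comm_adj2: "X ** adjoint_mat M = adjoint_mat M ** X \<Longrightarrow> adjoint_mat X ** M = M ** adjoint_mat X"
  by (metis adj_mult adj_adj)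

lemma adj_eqD: "adjoint_mat X = adjoint_mat Y \<Longrightarrow> X = Y"
  by (metis adj_adj)

theorem corollary1p3:
  fixes A :: "'i \<Rightarrow> complex ^'n ^'n" and I :: "'i set" and c :: complex
  assumes comm: "\<And>i j. i \<in> I \<Longrightarrow> j \<in> I \<Longrightarrow> A i ** A j = A j ** A i"
    and sum: "((\<lambda>i. adjoint_mat (A i) ** A i) has_sum mat c) I"
  shows "(\<forall>i\<in>I. normal_mat (A i)) \<and>
         (\<forall>X\<in>star_alg_gen (A ` I). \<forall>Y\<in>star_alg_gen (A ` I). X ** Y = Y ** X)"
proof -
  have allc: "adjoint_mat (A j) ** A i = A i ** adjoint_mat (A j)" if "j \<in> I" "i \<in> I" for i j
    using adj_comm[of I "A j" A c j] comm H1[OF sum] that by blast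
  define T where "T = {X. \<forall>i\<in>I. X ** A i = A i ** X \<and> X ** adjoint_mat (A i) = adjoint_mat (A i) ** X}"
  have inT: "X \<in> T" if "X \<in> star_alg_gen (A ` I)" for X
    using that
  proof (induction rule: star_alg_gen.induct)
    case (gen X) then show ?case unfolding T_def using comm allc by auto
  next
    case zero then show ?case unfolding T_def by simp
  next
    case (add X Y) then show ?case unfolding T_def by (simp add: matrix_add_ldistrib matrix_add_rdistrib')
  next
    case (smult X d) then show ?case unfolding T_def using comm_smult by blast
  next
    case (mult X Y) then show ?case unfolding T_def using comm_mult by blast
  next
    case (adj X) then show ?case unfolding T_def using comm_adj comm_adj2 by blast
  qed
  have cm: "\<forall>X\<in>star_alg_gen (A ` I). X ** Y = Y ** X" if "Y \<in> star_alg_gen (A ` I)" for Y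
    using that
  proof (induction rule: star_alg_gen.induct)
    case (gen Y) then show ?case using inT unfolding T_def by auto
  next
    case zero then show ?case by simp
  next
    case (add Y1 Y2) then show ?case by (simp add: matrix_add_ldistrib matrix_add_rdistrib')
  next
    case (smult Y d) then show ?case using comm_smult by metis
  next
    case (mult Y1 Y2) then show ?case using comm_mult by metis
  next
    case (adj Y)
    show ?case
    proof
      fix X assume X: "X \<in> star_alg_gen (A ` I)"
      then have "adjoint_mat X \<in> star_alg_gen (A ` I)" by (rule star_alg_gen.adj)
      then have "adjoint_mat X ** Y = Y ** adjoint_mat X" using adj.IH by auto
      then have "adjoint_mat (adjoint_mat X ** Y) = adjoint_mat (Y ** adjoint_mat X)" by simp
      then show "X ** adjoint_mat Y = adjoint_mat Y ** X" by (simp add: adj_mult)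
    qed
  qed
  show ?thesis
    using allc cm unfolding normal_mat_def by blast
qed

end
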